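(* Every Ito-Sadahiro number $\beta\ge 2$ is a Perron number.
   Context: For $\beta>1$ put $l_\beta=-\frac{\beta}{\beta+1}$ and $I_\beta=[l_\beta,\frac{1}{\beta+1})$. Define $T:I_\beta\to I_\beta$ by $T(x)=-\beta x-\lfloor -\beta x-l_\beta\rfloor$. The $(-\beta)$-expansion of $x\in I_\beta$ is the infinite word $d_{-\beta}(x)=x_1x_2x_3\cdots$ with $x_i=\lfloor -\beta T^{i-1}(x)-l_\beta\rfloor$ for $i\ge1$. A number $\beta>1$ is an Ito-Sadahiro number if $d_{-\beta}(l_\beta)$ is eventually periodic. A Perron number is an algebraic integer $\beta>1$ all of whose other algebraic conjugates have modulus strictly smaller than $\beta$. *)

theory Defs
  imports "HOL-Computational_Algebra.Computational_Algebra"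
begin

definition l_beta :: "real \<Rightarrow> real" where
  "l_beta \<beta> = - \<beta> / (\<beta> + 1)"

definition negbeta_T :: "real \<Rightarrow> real \<Rightarrow> real" where
  "negbeta_T \<beta> x = - \<beta> * x - of_int \<lfloor>- \<beta> * x - l_beta \<beta>\<rfloor>"

text \<open>Digit sequence of the (-beta)-expansion, indexed from 0:
  negbeta_digits beta x i is the digit x_(i+1) of the paper.\<close>
definition negbeta_digits :: "real \<Rightarrow> real \<Rightarrow> nat \<Rightarrow> int" where
  "negbeta_digits \<beta> x i = \<lfloor>- \<beta> * ((negbeta_T \<beta> ^^ i) x) - l_beta \<beta>\<rfloor>"

definition eventually_periodic :: "(nat \<Rightarrow> 'a) \<Rightarrow> bool" where
  "eventually_periodic s \<longleftrightarrow> (\<exists>N p. p > 0 \<and> (\<forall>n\<ge>N. s (n + p) = s n))"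

definition Ito_Sadahiro :: "real \<Rightarrow> bool" where
  "Ito_Sadahiro \<beta> \<longleftrightarrow> \<beta> > 1 \<and> eventually_periodic (negbeta_digits \<beta> (l_beta \<beta>))"

definition alg_conjugate :: "real \<Rightarrow> complex \<Rightarrow> bool" where
  "alg_conjugate \<beta> z \<longleftrightarrow> (\<exists>p :: int poly. irreducible p \<and>
      poly (map_poly of_int p) \<beta> = 0 \<and> poly (map_poly of_int p) z = 0)"

definition Perron :: "real \<Rightarrow> bool" where
  "Perron \<beta> \<longleftrightarrow> algebraic_int \<beta> \<and> \<beta> > 1 \<and>
     (\<forall>z. alg_conjugate \<beta> z \<and> z \<noteq> complex_of_real \<beta> \<longrightarrow> cmod z < \<beta>)"

end

theory Submission
  imports Defs
begin


definition S :: "real \<Rightarrow> real \<Rightarrow> real" where "S \<beta> x = 1 - \<beta>*x + of_int \<lfloor>\<beta>*x\<rfloor>"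
definition Sm :: "real \<Rightarrow> real \<Rightarrow> real" where "Sm \<beta> x = of_int \<lceil>\<beta>*x\<rceil> - \<beta>*x"

lemma S_bnd: "0 < S \<beta> x \<and> S \<beta> x \<le> 1"
  unfolding S_def using real_of_int_floor_add_one_gt[of "\<beta>*x"] of_int_floor_le[of "\<beta>*x"] by linarith

lemma Sm_bnd: "0 \<le> Sm \<beta> x \<and> Sm \<beta> x < 1"
  unfolding Sm_def using ceiling_correct[of "\<beta>*x"] by auto

lemma cplx_eq:
  fixes w :: complex and K \<beta> :: real
  assumes "K > 0" "cmod w \<le> \<beta> - K" "cmod (w + of_real K) = \<beta>"
  shows "w + of_real K = of_real \<beta>"
proof -
  have h1: "(Re w + K)^2 + (Im w)^2 = \<beta>^2"
  proof -
    have "cmod (w + of_real K)^2 = \<beta>^2" using assms(3) by simp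
    thus ?thesis by (simp add: cmod_power2)
  qed
  have h2: "(Re w)^2 + (Im w)^2 \<le> (\<beta> - K)^2"
  proof -
    have "cmod w ^2 \<le> (\<beta> - K)^2" using assms(2) norm_ge_zero power_mono by blast
    thus ?thesis by (simp add: cmod_power2)
  qed
  have "Re w \<ge> \<beta> - K"
  proof -
    have "\<beta>^2 \<le> (\<beta>-K)^2 + 2*K*Re w + K^2" using h1 h2 by (simp add: power2_eq_square algebra_simps)
    hence "2*K*(\<beta> - K) \<le> 2*K*Re w" by (simp add: power2_eq_square algebra_simps)
    thus ?thesis using assms(1) by simp
  qed
  moreover have "Re w \<le> \<beta> - K" using abs_Re_le_cmod[of w] assms(2) by linarith
  ultimately have re: "Re w = \<beta> - K" by simp
  with h2 have "(Im w)^2 \<le> 0" by simp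
  hence "Im w = 0" by (metis le_less not_less power2_less_0 zero_eq_power2)
  with re show ?thesis by (simp add: complex_eq_iff)
qed

lemma S_ident: "\<beta>*(b-a) = S \<beta> a - Sm \<beta> b + of_int (\<lceil>\<beta>*b\<rceil> - \<lfloor>\<beta>*a\<rfloor> - 1)"
  unfolding S_def Sm_def by (simp add: algebra_simps)

lemma n_nonneg:
  fixes \<beta> a b :: real
  assumes "\<beta> > 0" "a < b"
  shows "\<lceil>\<beta>*b\<rceil> - \<lfloor>\<beta>*a\<rfloor> - 1 \<ge> 0"
proof -
  have "\<beta>*a < \<beta>*b" using assms by simp
  hence "real_of_int \<lfloor>\<beta>*a\<rfloor> < of_int \<lceil>\<beta>*b\<rceil>"
    using of_int_floor_le[of "\<beta>*a"] le_of_int_ceiling[of "\<beta>*b"] by linarith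
  hence "\<lfloor>\<beta>*a\<rfloor> < \<lceil>\<beta>*b\<rceil>" by linarith
  thus ?thesis by simp
qed

lemma key:
  fixes \<beta> :: real and z :: complex and P :: "real set" and m :: "real \<Rightarrow> real \<Rightarrow> complex"
  assumes b2: "\<beta> > 2" and nonint: "\<beta> \<notin> \<int>" and finP: "finite P" and P0: "0 \<in> P" and P1: "1 \<in> P"
    and PS: "\<And>x. x \<in> P \<Longrightarrow> S \<beta> x \<in> P" and PSm: "\<And>x. x \<in> P \<Longrightarrow> Sm \<beta> x \<in> P"
    and madd: "\<And>x y w. x\<in>P \<Longrightarrow> y\<in>P \<Longrightarrow> w\<in>P \<Longrightarrow> m x y + m y w = m x w"
    and m01: "m 0 1 = 1"
    and mz: "\<And>a b. a\<in>P \<Longrightarrow> b\<in>P \<Longrightarrow> a<b \<Longrightarrow>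
              z * m a b = m (Sm \<beta> b) (S \<beta> a) + of_int (\<lceil>\<beta>*b\<rceil> - \<lfloor>\<beta>*a\<rfloor> - 1)"
  shows "cmod z < \<beta> \<or> z = of_real \<beta>"
proof (rule ccontr)
  assume H: "\<not> (cmod z < \<beta> \<or> z = of_real \<beta>)"
  hence zb: "cmod z \<ge> \<beta>" "z \<noteq> of_real \<beta>" by auto
  have mxx: "m x x = 0" if "x\<in>P" for x using madd[OF that that that] by simp
  have m10: "m 1 0 = -1" using madd[OF P1 P0 P1] mxx[OF P1] m01 by (simp add: eq_neg_iff_add_eq_0)
  define PP where "PP = {q \<in> P \<times> P. fst q < snd q}"
  define r where "r = (\<lambda>q. cmod (m (fst q) (snd q)) / (snd q - fst q))"
  have finPP: "finite PP" unfolding PP_def using finP by (auto intro: finite_subset[of _ "P \<times> P"])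
  have PP01: "(0,1) \<in> PP" unfolding PP_def using P0 P1 by auto
  define c where "c = Max (r ` PP)"
  have bound: "cmod (m x y) \<le> c*(y-x)" if "x\<in>P" "y\<in>P" "x<y" for x y
  proof -
    have "(x,y) \<in> PP" using that unfolding PP_def by auto
    hence "r (x,y) \<le> c" unfolding c_def using finPP by auto
    thus ?thesis using that unfolding r_def by (simp add: divide_le_eq)
  qed
  have c1: "c \<ge> 1"
  proof -
    have "r (0,1) \<le> c" unfolding c_def using finPP PP01 by auto
    thus ?thesis unfolding r_def using m01 by simp
  qed
  define good where "good = (\<lambda>x y. x\<in>P \<and> y\<in>P \<and> x<y \<and> cmod (m x y) = c*(y-x))"
  have step: "cmod (z * m a b) \<le> c*(\<beta>*(b-a)) \<and> (cmod (z* m a b) = c*(\<beta>*(b-a)) \<longrightarrow>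
      (good (Sm \<beta> b) (S \<beta> a) \<and> S \<beta> a - Sm \<beta> b = \<beta>*(b-a)) \<or>
      (good 0 (S \<beta> a) \<and> 2* S \<beta> a \<ge> \<beta>*(b-a)) \<or>
      (good (Sm \<beta> b) 1 \<and> 2*(1 - Sm \<beta> b) \<ge> \<beta>*(b-a)) \<or> c \<le> 1)"
    if ab: "a\<in>P" "b\<in>P" "a<b" for a b
  proof -
    define n where "n = \<lceil>\<beta>*b\<rceil> - \<lfloor>\<beta>*a\<rfloor> - 1"
    define A where "A = S \<beta> a"
    define B where "B = Sm \<beta> b"
    have AP: "A \<in> P" and BP: "B \<in> P" using PS PSm ab unfolding A_def B_def by auto
    have Ab: "0 < A" "A \<le> 1" using S_bnd unfolding A_def by auto
    have Bb: "0 \<le> B" "B < 1" using Sm_bnd unfolding B_def by auto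
    have id: "\<beta>*(b-a) = A - B + of_int n" unfolding A_def B_def n_def by (rule S_ident)
    have n0: "n \<ge> 0" unfolding n_def using n_nonneg[of \<beta> a b] b2 ab by simp
    have eq: "z * m a b = m B A + of_int n" using mz[OF ab] unfolding A_def B_def n_def by simp
    have pos: "\<beta>*(b-a) > 0" using b2 ab by simp
    show ?thesis
    proof (cases "n = 0")
      case True
      hence BA: "B < A" using id pos by simp
      have e: "z * m a b = m B A" using eq True by simp
      have bd: "cmod (m B A) \<le> c*(A - B)" using bound[OF BP AP BA] .
      have "A - B = \<beta>*(b-a)" using id True by simp
      thus ?thesis using e bd BA AP BP unfolding good_def A_def B_def by auto
    next
      case False
      hence n1: "n \<ge> 1" using n0 by simp
      have "m B A = m B 1 + m 1 0 + m 0 A"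
        using madd[OF BP P1 AP] madd[OF P1 P0 AP] by (simp add: add.assoc)
      hence e: "z * m a b = m 0 A + m B 1 + of_int (n - 1)" using eq m10 by simp
      have bX: "cmod (m 0 A) \<le> c*A" using bound[OF P0 AP] Ab by simp
      have bY: "cmod (m B 1) \<le> c*(1 - B)" using bound[OF BP P1] Bb by simp
      have bN: "cmod (of_int (n - 1) :: complex) = of_int (n-1)" by (subst norm_of_int) (use n1 in simp)
      have tri: "cmod (m 0 A + m B 1 + of_int (n - 1)) \<le> cmod (m 0 A) + cmod (m B 1) + of_int (n-1)"
        using norm_triangle_ineq[of "m 0 A + m B 1" "of_int (n - 1)"] norm_triangle_ineq[of "m 0 A" "m B 1"] bN
        by linarith
      have sum: "c*(\<beta>*(b-a)) = c*A + c*(1-B) + c * of_int (n-1)"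
      proof -
        have "c*(\<beta>*(b-a)) = c*(A - B + of_int n)" using id by simp
        also have "\<dots> = c*A + c*(1-B) + c * of_int (n-1)" by (simp add: algebra_simps)
        finally show ?thesis .
      qed
      have cn: "of_int (n-1) \<le> c * of_int (n-1)" using c1 n1 by (simp add: mult_le_cancel_right1)
      have ce: "cmod (z * m a b) = cmod (m 0 A + m B 1 + of_int (n - 1))" using e by simp
      have le: "cmod (z * m a b) \<le> c*(\<beta>*(b-a))" using ce tri bX bY sum cn by linarith
      moreover have "cmod (z* m a b) = c*(\<beta>*(b-a)) \<longrightarrow>
      (good 0 A \<and> 2* A \<ge> \<beta>*(b-a)) \<or> (good B 1 \<and> 2*(1 - B) \<ge> \<beta>*(b-a)) \<or> c \<le> 1"
      proof
        assume E: "cmod (z* m a b) = c*(\<beta>*(b-a))"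
        show "(good 0 A \<and> 2* A \<ge> \<beta>*(b-a)) \<or> (good B 1 \<and> 2*(1 - B) \<ge> \<beta>*(b-a)) \<or> c \<le> 1"
        proof (cases "n = 1")
          case False
          hence "n \<ge> 2" using n1 by simp
          hence "c * of_int (n-1) \<le> of_int (n-1)" using E ce tri bX bY sum by linarith
          moreover have "(0::real) < of_int (n-1)" using \<open>n\<ge>2\<close> by simp
          ultimately have "c \<le> 1" by (simp add: mult_le_cancel_right2)
          thus ?thesis by simp
        next
          case True
          hence e1: "z * m a b = m 0 A + m B 1" using e by simp
          have s1: "\<beta>*(b-a) = A + (1 - B)" using id True by simp
          have E1: "cmod (m 0 A + m B 1) = c*A + c*(1-B)" using E e1 s1 by (simp add: distrib_left)
          show ?thesis
          proof (cases "A \<ge> 1 - B")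
            case True
            have "cmod (m 0 A) \<ge> cmod (m 0 A + m B 1) - cmod (m B 1)"
              using norm_triangle_ineq[of "m 0 A" "m B 1"] by linarith
            hence "cmod (m 0 A) \<ge> c*A" using E1 bY by linarith
            hence "good 0 A" using bX P0 AP Ab unfolding good_def by auto
            thus ?thesis using True s1 by auto
          next
            case False
            have "cmod (m B 1) \<ge> cmod (m 0 A + m B 1) - cmod (m 0 A)"
              using norm_triangle_ineq[of "m 0 A" "m B 1"] by linarith
            hence "cmod (m B 1) \<ge> c*(1-B)" using E1 bX by linarith
            hence "good B 1" using bY P1 BP Bb unfolding good_def by auto
            thus ?thesis using False s1 by auto
          qed
        qed
      qed
      ultimately show ?thesis unfolding A_def B_def by blast
    qed
  qed
  have "c \<in> r ` PP" unfolding c_def using finPP PP01 by (intro Max_in) auto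
  then obtain q0 where q0: "q0 \<in> PP" "r q0 = c" by auto
  define a0 where "a0 = fst q0"
  define b0 where "b0 = snd q0"
  have a0b0: "a0 \<in> P" "b0 \<in> P" "a0 < b0" using q0 unfolding PP_def a0_def b0_def by auto
  have g0: "cmod (m a0 b0) = c*(b0-a0)" using q0(2) a0b0 unfolding r_def a0_def b0_def by (simp add: divide_eq_eq)
  have "cmod z * (c*(b0-a0)) \<le> c*(\<beta>*(b0-a0))"
    using step[OF a0b0] g0 by (simp add: norm_mult)
  hence "cmod z \<le> \<beta>" using c1 a0b0 by (simp add: mult.left_commute)
  hence zbeta: "cmod z = \<beta>" using zb by simp
  have goodstep: "cmod (z* m a b) = c*(\<beta>*(b-a))" if "good a b" for a b
    using that zbeta unfolding good_def by (simp add: norm_mult)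
  show False
  proof (cases "c \<le> 1")
    case True
    hence c1': "c = 1" using c1 by simp
    define K where "K = \<lceil>\<beta>\<rceil> - 1"
    have "\<beta> < of_int \<lceil>\<beta>\<rceil>" using nonint ceiling_correct[of \<beta>]
      by (metis Ints_of_int order_less_le)
    hence S1: "Sm \<beta> 1 = of_int K + 1 - \<beta>" "Sm \<beta> 1 < 1" "Sm \<beta> 1 \<ge> 0"
      using Sm_bnd[of \<beta> 1] unfolding Sm_def K_def by auto
    have Kpos: "of_int K > (0::real)" using S1 b2 by linarith
    have e: "z = m (Sm \<beta> 1) 1 + of_int K"
      using mz[OF P0 P1] m01 unfolding K_def S_def by simp
    have bw: "cmod (m (Sm \<beta> 1) 1) \<le> \<beta> - of_int K" using bound[OF PSm[OF P1] P1 S1(2)] S1 c1' by simp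
    have "m (Sm \<beta> 1) 1 + of_real (of_int K) = of_real \<beta>"
      using cplx_eq[of "of_int K" "m (Sm \<beta> 1) 1" \<beta>] Kpos bw zbeta e by simp
    thus False using e zb by simp
  next
    case False
    define GP where "GP = {q \<in> PP. good (fst q) (snd q)}"
    have finGP: "finite GP" unfolding GP_def using finPP by simp
    have GPq0: "q0 \<in> GP" unfolding GP_def good_def using q0 a0b0 g0 a0_def b0_def by auto
    define L where "L = Max ((\<lambda>q. snd q - fst q) ` GP)"
    have "L \<in> (\<lambda>q. snd q - fst q) ` GP" unfolding L_def using finGP GPq0 by (intro Max_in) auto
    then obtain q1 where q1: "q1 \<in> GP" "snd q1 - fst q1 = L" by auto
    have Lmax: "y - x \<le> L" if "good x y" for x y
    proof -
      have "(x,y) \<in> GP" using that unfolding GP_def PP_def good_def by auto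
      hence "y - x \<in> (\<lambda>q. snd q - fst q) ` GP" by (rule rev_image_eqI) simp
      thus ?thesis unfolding L_def using finGP by (intro Max_ge) auto
    qed
    define a where "a = fst q1"
    define b where "b = snd q1"
    have gab: "good a b" using q1 unfolding GP_def a_def b_def by auto
    hence ab: "a\<in>P" "b\<in>P" "a<b" unfolding good_def by auto
    have Lab: "b - a = L" using q1 a_def b_def by simp
    have big: "\<beta>*(b-a) > 2*(b-a)" using b2 ab by (intro mult_strict_right_mono) auto
    from step[OF ab] goodstep[OF gab] False
    have "(good (Sm \<beta> b) (S \<beta> a) \<and> S \<beta> a - Sm \<beta> b = \<beta>*(b-a)) \<or>
      (good 0 (S \<beta> a) \<and> 2* S \<beta> a \<ge> \<beta>*(b-a)) \<or>
      (good (Sm \<beta> b) 1 \<and> 2*(1 - Sm \<beta> b) \<ge> \<beta>*(b-a))" by auto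
    thus False
    proof (elim disjE conjE)
      assume g: "good (Sm \<beta> b) (S \<beta> a)" "S \<beta> a - Sm \<beta> b = \<beta>*(b-a)"
      show False using Lmax[OF g(1)] g(2) Lab big ab by (smt (verit))
    next
      assume g: "good 0 (S \<beta> a)" "2* S \<beta> a \<ge> \<beta>*(b-a)"
      show False using Lmax[OF g(1)] g(2) Lab big ab by (smt (verit))
    next
      assume g: "good (Sm \<beta> b) 1" "2*(1 - Sm \<beta> b) \<ge> \<beta>*(b-a)"
      show False using Lmax[OF g(1)] g(2) Lab big ab by (smt (verit))
    qed
  qed
qed



abbreviation ip :: "int poly \<Rightarrow> 'a::comm_ring_1 poly" where "ip q \<equiv> map_poly of_int q"

definition u :: "real \<Rightarrow> nat \<Rightarrow> real" where "u \<beta> n = (S \<beta> ^^ n) 1"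

lemma u_0[simp]: "u \<beta> 0 = 1" and u_Suc: "u \<beta> (Suc n) = S \<beta> (u \<beta> n)"
  unfolding u_def by auto

lemma T_step:
  assumes "\<beta> > 1"
  shows "negbeta_T \<beta> (l_beta \<beta> + 1 - x) = l_beta \<beta> + 1 - S \<beta> x"
proof -
  have "(\<beta> + 1) * l_beta \<beta> = - \<beta>" unfolding l_beta_def using assms by (simp add: field_simps)
  hence e1: "- \<beta> * (l_beta \<beta> + 1 - x) = \<beta> * x + l_beta \<beta>" by (simp add: algebra_simps)
  show ?thesis unfolding negbeta_T_def e1 S_def by simp
qed

lemma T_u:
  assumes "\<beta> > 1"
  shows "(negbeta_T \<beta> ^^ n) (l_beta \<beta>) = l_beta \<beta> + 1 - u \<beta> n"
proof (induction n)
  case 0 then show ?case by simp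
next
  case (Suc n)
  have "(negbeta_T \<beta> ^^ Suc n) (l_beta \<beta>) = negbeta_T \<beta> ((negbeta_T \<beta> ^^ n) (l_beta \<beta>))" by simp
  also have "\<dots> = l_beta \<beta> + 1 - S \<beta> (u \<beta> n)" unfolding Suc by (rule T_step[OF assms])
  finally show ?case by (simp add: u_Suc)
qed

lemma digits_u:
  assumes "\<beta> > 1"
  shows "negbeta_digits \<beta> (l_beta \<beta>) i = \<lfloor>\<beta> * u \<beta> i\<rfloor>"
proof -
  have "(\<beta> + 1) * l_beta \<beta> = - \<beta>" unfolding l_beta_def using assms by (simp add: field_simps)
  hence "- \<beta> * (l_beta \<beta> + 1 - u \<beta> i) - l_beta \<beta> = \<beta> * u \<beta> i" by (simp add: algebra_simps)
  thus ?thesis unfolding negbeta_digits_def T_u[OF assms] by simp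
qed

lemma u_bnd: "0 < u \<beta> n \<and> u \<beta> n \<le> 1"
  by (cases n) (auto simp: u_Suc S_bnd)

lemma u_periodic:
  assumes "\<beta> > 1" and ep: "eventually_periodic (negbeta_digits \<beta> (l_beta \<beta>))"
  shows "\<exists>N p. p > 0 \<and> (\<forall>n\<ge>N. u \<beta> (n + p) = u \<beta> n)"
proof -
  obtain N p where p: "p > 0" and per: "\<forall>n\<ge>N. negbeta_digits \<beta> (l_beta \<beta>) (n + p) = negbeta_digits \<beta> (l_beta \<beta>) n"
    using ep unfolding eventually_periodic_def by auto
  have fl: "\<lfloor>\<beta> * u \<beta> (n+p)\<rfloor> = \<lfloor>\<beta> * u \<beta> n\<rfloor>" if "n \<ge> N" for n
    using per that digits_u[OF assms(1)] by metis
  define \<delta> where "\<delta> = (\<lambda>m. u \<beta> (N+m+p) - u \<beta> (N+m))"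
  have drec: "\<delta> m = (-\<beta>)^m * \<delta> 0" for m
  proof (induction m)
    case 0 then show ?case by simp
  next
    case (Suc m)
    have "\<delta> (Suc m) = S \<beta> (u \<beta> (N+m+p)) - S \<beta> (u \<beta> (N+m))"
      unfolding \<delta>_def by (simp add: u_Suc)
    also have "\<dots> = - \<beta> * \<delta> m"
    proof -
      have "real_of_int \<lfloor>\<beta> * u \<beta> (N+m+p)\<rfloor> = of_int \<lfloor>\<beta> * u \<beta> (N+m)\<rfloor>" using fl[of "N+m"] by simp
      thus ?thesis unfolding S_def \<delta>_def by (simp add: right_diff_distrib)
    qed
    finally show ?case using Suc by simp
  qed
  have dbnd: "\<bar>\<delta> m\<bar> < 1" for m using u_bnd[of \<beta> "N+m+p"] u_bnd[of \<beta> "N+m"] unfolding \<delta>_def by auto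
  have d0: "\<delta> 0 = 0"
  proof (rule ccontr)
    assume "\<delta> 0 \<noteq> 0"
    hence pos: "\<bar>\<delta> 0\<bar> > 0" by simp
    obtain m where "1 / \<bar>\<delta> 0\<bar> < \<beta>^m" using real_arch_pow[OF assms(1)] by blast
    hence "1 < \<beta>^m * \<bar>\<delta> 0\<bar>" using pos by (simp add: divide_less_eq)
    moreover have "\<bar>\<delta> m\<bar> = \<beta>^m * \<bar>\<delta> 0\<bar>" using drec[of m] assms by (simp add: abs_mult power_abs)
    ultimately show False using dbnd[of m] by simp
  qed
  have "u \<beta> (n + p) = u \<beta> n" if "n \<ge> N" for n
  proof -
    have "\<delta> (n - N) = 0" using drec d0 by simp
    thus ?thesis unfolding \<delta>_def using that by simp
  qed
  thus ?thesis using p by blast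
qed



lemma ip_add: "(ip (p + q) :: 'a::comm_ring_1 poly) = ip p + ip q"
  by (rule poly_eqI) (simp add: coeff_map_poly)
lemma ip_diff: "(ip (p - q) :: 'a::comm_ring_1 poly) = ip p - ip q"
  by (rule poly_eqI) (simp add: coeff_map_poly)
lemma ip_mult: "(ip (p * q) :: 'a::comm_ring_1 poly) = ip p * ip q"
  by (rule poly_eqI) (simp add: coeff_map_poly coeff_mult)
lemma ip_smult: "(ip (smult a p) :: 'a::comm_ring_1 poly) = smult (of_int a) (ip p)"
  by (rule poly_eqI) (simp add: coeff_map_poly)
lemma ip_const: "(ip [:a:] :: 'a::comm_ring_1 poly) = [:of_int a:]"
  by (rule poly_eqI) (simp add: coeff_map_poly coeff_pCons split: nat.splits)
lemma ip_X: "(ip [:0,1:] :: 'a::comm_ring_1 poly) = [:0,1:]"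
  by (rule poly_eqI) (simp add: coeff_map_poly coeff_pCons split: nat.splits)
lemma ip_pCons: "(ip (pCons a p) :: 'a::comm_ring_1 poly) = pCons (of_int a) (ip p)"
  by (rule poly_eqI) (simp add: coeff_map_poly coeff_pCons split: nat.splits)
lemma ip_uminus: "(ip (- p) :: 'a::comm_ring_1 poly) = - ip p"
  by (rule poly_eqI) (simp add: coeff_map_poly)
lemma ip_pCons0: "(ip (pCons 0 p) :: 'a::comm_ring_1 poly) = pCons 0 (ip p)"
  by (rule poly_eqI) (simp add: coeff_map_poly coeff_pCons split: nat.splits)

fun G :: "real \<Rightarrow> nat \<Rightarrow> int poly" where
  "G \<beta> 0 = 1"
| "G \<beta> (Suc n) = [:1 + \<lfloor>\<beta> * u \<beta> n\<rfloor>:] - pCons 0 (G \<beta> n)"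

lemma G_poly: "poly (ip (G \<beta> n)) \<beta> = u \<beta> n"
  by (induction n) (simp_all add: u_Suc S_def ip_pCons ip_uminus)

lemma G_deg: "degree (G \<beta> n) = n \<and> coeff (G \<beta> n) n = (-1)^n"
proof (induction n)
  case 0 then show ?case by simp
next
  case (Suc n)
  have nz: "G \<beta> n \<noteq> 0" using Suc by auto
  have d: "degree (pCons 0 (G \<beta> n)) = Suc n" using Suc nz by simp
  have "degree (G \<beta> (Suc n)) = Suc n"
    by (simp only: G.simps, subst diff_conv_add_uminus, subst degree_add_eq_right) (use d nz Suc in simp_all)
  moreover have "coeff (G \<beta> (Suc n)) (Suc n) = (-1)^Suc n" using Suc by simp
  ultimately show ?case by simp
qed

lemma no_small:
  fixes \<beta> :: real
  assumes pr: "prime_elem p" and pb: "poly (ip p) \<beta> = 0"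
  shows "r \<noteq> 0 \<Longrightarrow> poly (ip r) \<beta> = 0 \<Longrightarrow> degree p \<le> degree r"
proof (induction "degree r" arbitrary: r rule: less_induct)
  case less
  have p0: "p \<noteq> 0" using pr by auto
  show ?case
  proof (rule ccontr)
    assume lt: "\<not> degree p \<le> degree r"
    define s where "s = pseudo_mod p r"
    obtain a q where aq: "a \<noteq> 0" "smult a p = r * q + s" using pseudo_mod(1)[OF less(2)] s_def by blast
    have sd: "s = 0 \<or> degree s < degree r" using pseudo_mod(2)[OF less(2)] s_def by blast
    have "poly (ip (smult a p)) \<beta> = 0" using pb by (simp add: ip_smult)
    hence "poly (ip (r*q + s)) \<beta> = 0" using aq by simp
    hence sb: "poly (ip s) \<beta> = 0" using less(3) by (simp add: ip_add ip_mult)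
    have s0: "s = 0"
    proof (rule ccontr)
      assume "s \<noteq> 0"
      hence "degree p \<le> degree s" using less(1)[of s] sd sb by auto
      thus False using sd \<open>s \<noteq> 0\<close> lt by simp
    qed
    hence eq: "smult a p = r * q" using aq by simp
    hence "p dvd r * q" by (metis dvd_smult dvd_refl)
    hence "p dvd r \<or> p dvd q" using pr by (simp add: prime_elem_dvd_mult_iff)
    thus False
    proof
      assume "p dvd r"
      thus False using lt less(2) dvd_imp_degree_le by blast
    next
      assume "p dvd q"
      then obtain w where w: "q = p * w" by (auto elim: dvdE)
      have "p * [:a:] = p * (r * w)" using eq w by (simp add: ac_simps)
      hence rw: "[:a:] = r * w" using mult_left_cancel[OF p0] by blast
      hence "w \<noteq> 0" using aq by auto
      hence "degree r = 0" using rw less(2) by (metis add_eq_0_iff_both_eq_0 degree_mult_eq degree_pCons_0)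
      then obtain c where "r = [:c:]" by (rule degree_eq_zeroE)
      thus False using less(2) less(3) by (simp add: ip_const)
    qed
  qed
qed

lemma transfer:
  fixes \<beta> :: real and z :: complex
  assumes pr: "prime_elem p" and pb: "poly (ip p) \<beta> = 0" and pz: "poly (ip p) z = 0"
    and qb: "poly (ip Q) \<beta> = 0"
  shows "poly (ip Q) z = 0"
proof -
  have p0: "p \<noteq> 0" using pr by auto
  define s where "s = pseudo_mod Q p"
  obtain a q where aq: "a \<noteq> 0" "smult a Q = p * q + s" using pseudo_mod(1)[OF p0] s_def by blast
  have sd: "s = 0 \<or> degree s < degree p" using pseudo_mod(2)[OF p0] s_def by blast
  have "poly (ip (smult a Q)) \<beta> = 0" using qb by (simp add: ip_smult)
  hence "poly (ip (p*q + s)) \<beta> = 0" using aq by simp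
  hence sb: "poly (ip s) \<beta> = 0" using pb by (simp add: ip_add ip_mult)
  have s0: "s = 0" using no_small[OF pr pb, of s] sb sd by (cases "s = 0") auto
  have "poly (ip (smult a Q)) z = poly (ip (p * q)) z" using aq s0 by simp
  hence "of_int a * poly (ip Q) z = 0" using pz by (simp add: ip_smult ip_mult)
  thus ?thesis using aq by simp
qed



lemma alg_int_beta:
  assumes "\<beta> > 1" "p > 0" "\<forall>n\<ge>N. u \<beta> (n + p) = u \<beta> n"
  shows "algebraic_int \<beta>"
proof -
  define Q where "Q = G \<beta> (N+p) - G \<beta> N"
  have QB: "poly (ip Q) \<beta> = 0" unfolding Q_def using assms(3) by (simp add: ip_diff G_poly)
  have d1: "degree (G \<beta> (N+p)) = N+p" "coeff (G \<beta> (N+p)) (N+p) = (-1)^(N+p)" using G_deg by auto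
  have d2: "degree (G \<beta> N) = N" using G_deg by auto
  have "degree (G \<beta> N) < degree (G \<beta> (N+p))" using d1 d2 assms(2) by simp
  hence dQ: "degree Q = N+p" unfolding Q_def using d1 by (subst diff_conv_add_uminus, subst degree_add_eq_left) simp_all
  have cQ: "coeff Q (N+p) = (-1)^(N+p)" unfolding Q_def using d1 d2 assms(2)
    by (simp add: coeff_eq_0)
  define Q' where "Q' = smult ((-1)^(N+p)) Q"
  have "lead_coeff Q' = 1" unfolding Q'_def using dQ cQ by (simp add: power_mult_distrib[symmetric])
  moreover have "poly (ip Q') \<beta> = 0" unfolding Q'_def using QB by (simp add: ip_smult)
  ultimately show ?thesis unfolding algebraic_int_altdef_ipoly by blast
qed

lemma u_range:
  assumes "p > 0" "\<forall>n\<ge>N. u \<beta> (n + p) = u \<beta> n"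
  shows "u \<beta> n \<in> u \<beta> ` {..<N+p}"
proof (induction n rule: less_induct)
  case (less n)
  show ?case
  proof (cases "n < N + p")
    case True then show ?thesis by simp
  next
    case False
    hence "u \<beta> n = u \<beta> (n - p)" using assms(2)[rule_format, of "n-p"] by simp
    moreover have "n - p < n" using assms(1) False by simp
    ultimately show ?thesis using less by simp
  qed
qed

lemma Sm_u: "Sm \<beta> (u \<beta> n) = 0 \<or> Sm \<beta> (u \<beta> n) = u \<beta> (Suc n)"
proof (cases "\<beta> * u \<beta> n = of_int \<lfloor>\<beta> * u \<beta> n\<rfloor>")
  case True
  hence "\<lceil>\<beta> * u \<beta> n\<rceil> = \<lfloor>\<beta> * u \<beta> n\<rfloor>" by (metis ceiling_of_int)
  thus ?thesis using True unfolding Sm_def by simp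
next
  case False
  hence "\<lceil>\<beta> * u \<beta> n\<rceil> = \<lfloor>\<beta> * u \<beta> n\<rfloor> + 1" by (simp add: ceiling_altdef)
  thus ?thesis unfolding Sm_def u_Suc S_def by simp
qed

lemma conj_bound:
  assumes IS: "Ito_Sadahiro \<beta>" and b2: "\<beta> \<ge> 2" and ac: "alg_conjugate \<beta> z"
    and zne: "z \<noteq> complex_of_real \<beta>"
  shows "cmod z < \<beta>"
proof -
  have b1: "\<beta> > 1" using b2 by simp
  obtain N p where p: "p > 0" and per: "\<forall>n\<ge>N. u \<beta> (n + p) = u \<beta> n"
    using u_periodic[OF b1] IS unfolding Ito_Sadahiro_def by blast
  obtain P0 :: "int poly" where irr: "irreducible P0" and P0b: "poly (ip P0) \<beta> = 0"
    and P0z: "poly (ip P0) z = 0" using ac unfolding alg_conjugate_def by blast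
  have pr: "prime_elem P0" using irr by (rule irreducible_imp_prime_poly)
  have tr: "poly (ip Q) z = 0" if "poly (ip Q) \<beta> = 0" for Q
    using transfer[OF pr P0b P0z that] .
  show ?thesis
  proof (cases "\<beta> \<in> \<int>")
    case True
    then obtain k where k: "\<beta> = of_int k" by (auto elim: Ints_cases)
    have "poly (ip [:-k, 1:]) \<beta> = 0" using k by (simp add: ip_pCons)
    hence "poly (ip [:-k, 1:]) z = 0" by (rule tr)
    hence "z = of_int k" by (simp add: ip_pCons)
    hence "z = complex_of_real \<beta>" using k by simp
    thus ?thesis using zne by simp
  next
    case False
    define sig where "sig x = poly (ip (SOME q. poly (ip q) \<beta> = x)) z" for x
    have sig_eq: "sig x = poly (ip q) z" if qx: "poly (ip q) \<beta> = x" for q x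
    proof -
      define q' where "q' = (SOME q. poly (ip q) \<beta> = x)"
      have "poly (ip q') \<beta> = x" unfolding q'_def using qx by (rule someI)
      hence "poly (ip (q' - q)) \<beta> = 0" using qx by (simp add: ip_diff)
      hence "poly (ip (q' - q)) z = 0" by (rule tr)
      thus ?thesis unfolding sig_def q'_def[symmetric] by (simp add: ip_diff)
    qed
    define P where "P = insert 0 (range (u \<beta>))"
    have inZ: "\<exists>q. poly (ip q) \<beta> = x" if "x \<in> P" for x
      using that G_poly unfolding P_def by (auto intro: exI[of _ 0])
    have finP: "finite P"
    proof -
      have "range (u \<beta>) \<subseteq> u \<beta> ` {..<N+p}" using u_range[OF p per] by blast
      thus ?thesis unfolding P_def by (simp add: finite_subset)
    qed
    have P0: "0 \<in> P" and P1: "1 \<in> P" unfolding P_def by (auto intro: range_eqI[of _ _ 0])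
    have PS: "S \<beta> x \<in> P" if "x \<in> P" for x
    proof -
      from that have "x = 0 \<or> x \<in> range (u \<beta>)" unfolding P_def by auto
      thus ?thesis
      proof
      assume "x = 0" hence "S \<beta> x = 1" by (simp add: S_def)
      thus ?thesis using P1 by simp
    next
      assume "x \<in> range (u \<beta>)"
      then obtain n where "x = u \<beta> n" by auto
      hence "S \<beta> x = u \<beta> (Suc n)" by (simp add: u_Suc)
      thus ?thesis unfolding P_def by simp
    qed
    qed
    have PSm: "Sm \<beta> x \<in> P" if "x \<in> P" for x
    proof -
      from that have "x = 0 \<or> x \<in> range (u \<beta>)" unfolding P_def by auto
      thus ?thesis
      proof
      assume "x = 0" hence "Sm \<beta> x = 0" by (simp add: Sm_def)
      thus ?thesis using P0 by simp
    next
      assume "x \<in> range (u \<beta>)"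
      then obtain n where "x = u \<beta> n" by auto
      thus ?thesis using Sm_u[of \<beta> n] P0 unfolding P_def by auto
    qed
    qed
    define m where "m x y = sig (y - x)" for x y
    have madd: "m x y + m y w = m x w" if xyw: "x\<in>P" "y\<in>P" "w\<in>P" for x y w
    proof -
      obtain qx where qx: "poly (ip qx) \<beta> = x" using inZ[OF xyw(1)] by blast
      obtain qy where qy: "poly (ip qy) \<beta> = y" using inZ[OF xyw(2)] by blast
      obtain qw where qw: "poly (ip qw) \<beta> = w" using inZ[OF xyw(3)] by blast
      note q = qx qy qw
      have "m x y = poly (ip (qy - qx)) z" unfolding m_def by (rule sig_eq) (simp add: ip_diff q)
      moreover have "m y w = poly (ip (qw - qy)) z" unfolding m_def by (rule sig_eq) (simp add: ip_diff q)
      moreover have "m x w = poly (ip (qw - qx)) z" unfolding m_def by (rule sig_eq) (simp add: ip_diff q)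
      ultimately show ?thesis by (simp add: ip_diff)
    qed
    have m01: "m 0 1 = 1" unfolding m_def using sig_eq[of 1 1] by simp
    have mz: "z * m a b = m (Sm \<beta> b) (S \<beta> a) + of_int (\<lceil>\<beta>*b\<rceil> - \<lfloor>\<beta>*a\<rfloor> - 1)"
      if ab: "a\<in>P" "b\<in>P" "a<b" for a b
    proof -
      define n where "n = \<lceil>\<beta>*b\<rceil> - \<lfloor>\<beta>*a\<rfloor> - 1"
      obtain qa where qa: "poly (ip qa) \<beta> = a" using inZ[OF ab(1)] by blast
      obtain qb where qb: "poly (ip qb) \<beta> = b" using inZ[OF ab(2)] by blast
      obtain qA where qA: "poly (ip qA) \<beta> = S \<beta> a" using inZ[OF PS[OF ab(1)]] by blast
      obtain qB where qB: "poly (ip qB) \<beta> = Sm \<beta> b" using inZ[OF PSm[OF ab(2)]] by blast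
      note q = qa qb qA qB
      define Q where "Q = qA - qB + [:n:] - pCons 0 (qb - qa)"
      have "poly (ip Q) \<beta> = S \<beta> a - Sm \<beta> b + of_int n - \<beta>*(b-a)"
        unfolding Q_def by (simp add: ip_diff ip_add ip_pCons0 ip_const q)
      also have "\<dots> = 0" using S_ident[of \<beta> b a] unfolding n_def by simp
      finally have "poly (ip Q) z = 0" by (rule tr)
      hence e: "poly (ip qA) z - poly (ip qB) z + of_int n - z * (poly (ip qb) z - poly (ip qa) z) = 0"
        unfolding Q_def by (simp add: ip_diff ip_add ip_pCons0 ip_const)
      have e2: "poly (ip qA) z - poly (ip qB) z + of_int n = z * (poly (ip qb) z - poly (ip qa) z)"
        by (subst eq_iff_diff_eq_0) (rule e)
      have h1: "m a b = poly (ip (qb - qa)) z" unfolding m_def by (rule sig_eq) (simp add: ip_diff q)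
      have h2: "m (Sm \<beta> b) (S \<beta> a) = poly (ip (qA - qB)) z" unfolding m_def by (rule sig_eq) (simp add: ip_diff q)
      show ?thesis unfolding n_def[symmetric] h1 h2 ip_diff poly_diff e2 by simp
    qed
    have "\<beta> > 2" using b2 False by (metis Ints_numeral le_less)
    from key[OF this False finP P0 P1 PS PSm madd m01 mz] zne show ?thesis by blast
  qed
qed

theorem corollary2:
  fixes \<beta> :: real
  assumes "Ito_Sadahiro \<beta>" and "\<beta> \<ge> 2"
  shows "Perron \<beta>"
proof -
  have b1: "\<beta> > 1" using assms(2) by simp
  obtain N p where p: "p > 0" and per: "\<forall>n\<ge>N. u \<beta> (n + p) = u \<beta> n"
    using u_periodic[OF b1] assms(1) unfolding Ito_Sadahiro_def by blast
  show ?thesis unfolding Perron_def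
    using alg_int_beta[OF b1 p per] b1 conj_bound[OF assms] by blast
qed


end
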